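(* Let $a,b,n$ be positive integers, $h(j)=aj^n+b$ for $j\ge0$, $h(j)=0$ for $j<0$, $\alpha=a/b$ and $c(h)=\lfloor\alpha\rfloor+1$. Let $$\alpha_1=2^n+\sqrt{2^{2n}-2^n+2}-\tfrac12,\qquad g(x)=x+\tfrac32-\sqrt{x^2-(2^{n+1}-1)x-\tfrac74}\ \ (x>\alpha_1).$$ Let $d$ be an integer with $2\le d\le c(h)$. Then: (1) if $\alpha\le\alpha_1$, then $\beta_2^d(h)\ge0$; (2) if $\alpha>\alpha_1$ and $d\le g(\alpha)$, then $\beta_2^d(h)\ge0$; (3) if $\alpha>\alpha_1$ and $d>g(\alpha)$, then $\operatorname{hdepth}(h)<d$.
   Context: For a nonzero function $h:\mathbb Z\to\mathbb Z_{\ge 0}$ with $h(j)=0$ for all sufficiently negative $j$, and integers $k\le d$, set $\beta_k^d(h)=\sum_{j\le k}(-1)^{k-j}\binom{d-j}{k-j}h(j)$, and $\operatorname{hdepth}(h)=\max\{d\in\mathbb Z:\ \beta_k^d(h)\ge 0\text{ for all integers }k\le d\}$. *)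

theory Defs
  imports Complex_Main
begin

text \<open>beta_k^d(h) = sum over j <= k of (-1)^(k-j) * binom(d-j, k-j) * h(j).
  Only finitely many terms are nonzero when h vanishes for sufficiently negative j
  (and j <= k); we sum over those terms.\<close>
definition beta :: "int \<Rightarrow> int \<Rightarrow> (int \<Rightarrow> int) \<Rightarrow> int" where
  "beta k d h = (\<Sum>j\<in>{j. j \<le> k \<and> h j \<noteq> 0}.
      (-1) ^ nat (k - j) * int (nat (d - j) choose nat (k - j)) * h j)"

definition hdepth :: "(int \<Rightarrow> int) \<Rightarrow> int" where
  "hdepth h = (GREATEST d. \<forall>k. k \<le> d \<longrightarrow> 0 \<le> beta k d h)"

end

theory Submission
  imports Defs
begin

lemma beta_eval:
  assumes h_def: "\<And>j. h j = (if 0 \<le> j then int a * j ^ n + int b else 0)" and "0 < b"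
  shows "beta k D h = (\<Sum>j\<in>{0..k}. (-1) ^ nat (k - j) * int (nat (D - j) choose nat (k - j)) * h j)"
proof -
  have "{j. j \<le> k \<and> h j \<noteq> 0} = {0..k}"
  proof (intro set_eqI iffI)
    fix j assume "j \<in> {0..k}"
    then have "h j > 0" using h_def[of j] assms(2) by (simp add: add_nonneg_pos)
    then show "j \<in> {j. j \<le> k \<and> h j \<noteq> 0}" using \<open>j \<in> {0..k}\<close> by simp
  qed (auto simp: h_def split: if_splits)
  then show ?thesis unfolding beta_def by simp
qed

lemma beta2:
  assumes h_def: "\<And>j. h j = (if 0 \<le> j then int a * j ^ n + int b else 0)" and "0 < b" and "2 \<le> D" and "0 < n"
  shows "2 * beta 2 D h = D * (D - 1) * int b - 2 * (D - 1) * (int a + int b) + 2 * (int a * 2 ^ n + int b)"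
proof -
  have s: "{0..2::int} = {0,1,2}" by auto
  have c: "int (nat D choose 2) * 2 = D * (D - 1)"
  proof -
    have "int (nat D choose 2) * 2 = int ((nat D choose 2) * 2)" by simp
    also have "(nat D choose 2) * 2 = nat D * (nat D - 1)"
    proof -
      have "even (nat D * (nat D - 1))"
        by (cases "even (nat D)") (auto simp: even_mult_iff)
      then show ?thesis by (simp add: choose_two)
    qed
    finally show ?thesis using assms(3) by (simp add: of_nat_diff)
  qed
  have c1: "int (nat (D - 1) choose 1) = D - 1" using assms(3) by simp
  have "nat (2 - 1) = (1::nat)" by simp
  show ?thesis
  proof -
    have e: "beta 2 D h = int (nat D choose 2) * h 0 - (D - 1) * h 1 + h 2"
      using c1 assms(3) by (simp add: beta_eval[OF h_def assms(2)] s numeral_2_eq_2 nat_diff_distrib algebra_simps)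
    have h0: "h 0 = int b" using assms(4) by (simp add: h_def)
    have h1: "h 1 = int a + int b" by (simp add: h_def)
    have h2: "h 2 = int a * 2 ^ n + int b" by (simp add: h_def)
    have "2 * beta 2 D h = int b * (2 * int (nat D choose 2)) - 2 * (D - 1) * (int a + int b) + 2 * (int a * 2 ^ n + int b)"
      unfolding e h0 h1 h2 by (simp add: algebra_simps)
    also have "2 * int (nat D choose 2) = D * (D - 1)" using c by simp
    finally show ?thesis by (simp add: algebra_simps)
  qed
qed

lemma beta1:
  assumes h_def: "\<And>j. h j = (if 0 \<le> j then int a * j ^ n + int b else 0)" and "0 < b" and "1 \<le> D" and "0 < n"
  shows "beta 1 D h = int a + int b - D * int b"
proof -
  have s: "{0..1::int} = {0,1}" by auto
  have "beta 1 D h = - (D * h 0) + h 1"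
    using assms(3) by (simp add: beta_eval[OF h_def assms(2)] s)
  then show ?thesis using assms(4) by (simp add: h_def)
qed

lemma beta_neg:
  assumes h_def: "\<And>j. h j = (if 0 \<le> j then int a * j ^ n + int b else 0)" and "0 < b" and "k < 0"
  shows "beta k D h = 0"
  using assms by (simp add: beta_eval[OF h_def assms(2)])

lemma beta00:
  assumes h_def: "\<And>j. h j = (if 0 \<le> j then int a * j ^ n + int b else 0)" and "0 < b"
  shows "beta 0 0 h \<ge> 0"
  using assms by (simp add: beta_eval[OF h_def assms(2)])

theorem lemma3p4:
  fixes a b n :: nat and h :: "int \<Rightarrow> int" and d :: int
    and \<alpha> \<alpha>\<^sub>1 :: real and g :: "real \<Rightarrow> real"
  assumes "0 < a" "0 < b" "0 < n"
    and h_def: "\<And>j. h j = (if 0 \<le> j then int a * j ^ n + int b else 0)"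
    and alpha_def: "\<alpha> = real a / real b"
    and alpha1_def: "\<alpha>\<^sub>1 = 2 ^ n + sqrt (2 ^ (2 * n) - 2 ^ n + 2) - 1 / 2"
    and g_def: "\<And>x. g x = x + 3 / 2 - sqrt (x\<^sup>2 - (2 ^ (n + 1) - 1) * x - 7 / 4)"
    and "2 \<le> d" "d \<le> \<lfloor>\<alpha>\<rfloor> + 1"
  shows "(\<alpha> \<le> \<alpha>\<^sub>1 \<longrightarrow> 0 \<le> beta 2 d h)
       \<and> (\<alpha> > \<alpha>\<^sub>1 \<and> real_of_int d \<le> g \<alpha> \<longrightarrow> 0 \<le> beta 2 d h)
       \<and> (\<alpha> > \<alpha>\<^sub>1 \<and> real_of_int d > g \<alpha> \<longrightarrow> hdepth h < d)"
proof -
  define t :: real where "t = 2 ^ n"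
  define s where "s = sqrt (t\<^sup>2 - t + 2)"
  define \<Delta> where "\<Delta> = \<alpha>\<^sup>2 - (2 * t - 1) * \<alpha> - 7 / 4"
  define Q where "Q x = (x - \<alpha> - 3/2)\<^sup>2 - \<Delta>" for x :: real
  have bpos: "real b > 0" using assms(2) by simp
  have apos: "\<alpha> > 0" using assms(1,2) alpha_def by simp
  have t2: "t \<ge> 2" unfolding t_def using assms(3)
  proof -
    have "(2::real) ^ 1 \<le> 2 ^ n" using assms(3) by (intro power_increasing) auto
    then show "(2::real) \<le> 2 ^ n" by simp
  qed
  have a1: "\<alpha>\<^sub>1 = t + s - 1/2"
    unfolding alpha1_def s_def t_def by (simp add: power_mult power2_eq_square flip: power_mult_distrib)
  have gal: "g \<alpha> = \<alpha> + 3/2 - sqrt \<Delta>"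
    unfolding g_def \<Delta>_def t_def by simp
  have "t \<le> t * t" using t2 by (simp add: mult_le_cancel_left1)
  then have nn: "0 \<le> t\<^sup>2 - t + 2" by (simp add: power2_eq_square)
  have ss: "s\<^sup>2 = t\<^sup>2 - t + 2" unfolding s_def using nn by simp
  have s0: "s \<ge> 0" unfolding s_def using nn by simp
  have r2neg: "t - 1/2 - s < 0"
  proof -
    have "(t - 1/2)\<^sup>2 < s\<^sup>2" unfolding ss by (simp add: power2_eq_square algebra_simps)
    then have "t - 1/2 < s" using s0 power2_less_imp_less by blast
    then show ?thesis by simp
  qed
  have fact: "\<Delta> = (\<alpha> - \<alpha>\<^sub>1) * (\<alpha> - (t - 1/2 - s))"
    unfolding \<Delta>_def a1 using ss apply (simp add: power2_eq_square algebra_simps) by (simp add: field_simps)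
  have dle: "real_of_int d \<le> \<alpha> + 1" using assms(9) by linarith
  have key: "real_of_int (2 * beta 2 D h) = real b * Q (real_of_int D)" if "2 \<le> D" for D
  proof -
    have "real_of_int (2 * beta 2 D h) = real_of_int (D * (D - 1) * int b - 2 * (D - 1) * (int a + int b) + 2 * (int a * 2 ^ n + int b))"
      using beta2[OF h_def assms(2) that assms(3)] by simp
    also have "\<dots> = real b * Q (real_of_int D)"
      unfolding Q_def \<Delta>_def alpha_def t_def using bpos
      by (simp add: field_simps power2_eq_square)
    finally show ?thesis .
  qed
  have pos_iff: "0 \<le> beta 2 D h \<longleftrightarrow> 0 \<le> Q (real_of_int D)" if "2 \<le> D" for D
  proof -
    have "0 \<le> beta 2 D h \<longleftrightarrow> 0 \<le> real_of_int (2 * beta 2 D h)" by simp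
    also have "\<dots> \<longleftrightarrow> 0 \<le> Q (real_of_int D)" using key[OF that] bpos
      by (simp add: zero_le_mult_iff)
    finally show ?thesis .
  qed
  have P1: "0 \<le> beta 2 d h" if "\<alpha> \<le> \<alpha>\<^sub>1"
  proof -
    have "\<Delta> \<le> 0" unfolding fact using that apos r2neg
      by (simp add: mult_nonpos_nonneg)
    then have "0 \<le> Q (real_of_int d)" unfolding Q_def by (smt (verit) zero_le_power2)
    then show ?thesis using pos_iff assms(8) by simp
  qed
  have Dpos: "\<Delta> > 0" if "\<alpha> > \<alpha>\<^sub>1"
    unfolding fact using that apos r2neg by simp
  have P2: "0 \<le> beta 2 d h" if "\<alpha> > \<alpha>\<^sub>1" "real_of_int d \<le> g \<alpha>"
  proof -
    have "sqrt \<Delta> \<le> \<alpha> + 3/2 - d" using that(2) gal by simp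
    then have "(sqrt \<Delta>)\<^sup>2 \<le> (\<alpha> + 3/2 - d)\<^sup>2"
      by (rule power_mono) (use Dpos[OF that(1)] in auto)
    moreover have "(d - \<alpha> - 3/2)\<^sup>2 = (\<alpha> + 3/2 - d)\<^sup>2" by (simp add: power2_eq_square algebra_simps)
    ultimately have "\<Delta> \<le> (d - \<alpha> - 3/2)\<^sup>2" using Dpos[OF that(1)] by simp
    then have "0 \<le> Q (real_of_int d)" unfolding Q_def by simp
    then show ?thesis using pos_iff assms(8) by simp
  qed
  have neg: "\<not> (\<forall>k. k \<le> D \<longrightarrow> 0 \<le> beta k D h)" if "\<alpha> > \<alpha>\<^sub>1" "real_of_int d > g \<alpha>" "d \<le> D" for D
  proof
    assume all: "\<forall>k. k \<le> D \<longrightarrow> 0 \<le> beta k D h"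
    have D2: "2 \<le> D" using that(3) assms(8) by simp
    have "0 \<le> beta 1 D h" using all D2 by simp
    then have "D * int b \<le> int a + int b" using beta1[OF h_def assms(2) _ assms(3), of D] D2 by simp
    then have "real_of_int (D * int b) \<le> real_of_int (int a + int b)" by (simp only: of_int_le_iff)
    then have "real_of_int D * real b \<le> real a + real b" by simp
    then have Dle: "real_of_int D \<le> \<alpha> + 1" unfolding alpha_def using bpos
      by (simp add: field_simps)
    have dD: "real_of_int d \<le> real_of_int D" using that(3) by simp
    have A: "\<alpha> + 3/2 - D < sqrt \<Delta>" using that(2) gal dD by simp
    have B: "0 \<le> \<alpha> + 3/2 - D" using Dle by simp
    have "(\<alpha> + 3/2 - D)\<^sup>2 < (sqrt \<Delta>)\<^sup>2"
      using A B by (intro power_strict_mono) auto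
    moreover have "(D - \<alpha> - 3/2)\<^sup>2 = (\<alpha> + 3/2 - D)\<^sup>2" by (simp add: power2_eq_square algebra_simps)
    ultimately have "(D - \<alpha> - 3/2)\<^sup>2 < \<Delta>" using Dpos[OF that(1)] by simp
    then have "Q (real_of_int D) < 0" unfolding Q_def by simp
    then have "beta 2 D h < 0" using pos_iff[OF D2] by simp
    then show False using all[rule_format, of 2] D2 by simp
  qed
  have P3: "hdepth h < d" if "\<alpha> > \<alpha>\<^sub>1" "real_of_int d > g \<alpha>"
  proof -
    define P where "P D = (\<forall>k. k \<le> D \<longrightarrow> 0 \<le> beta k D h)" for D
    have bnd: "D < d" if "P D" for D using neg[OF \<open>\<alpha> > \<alpha>\<^sub>1\<close> \<open>real_of_int d > g \<alpha>\<close>, of D] that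
      unfolding P_def by force
    have P0: "P 0" unfolding P_def
    proof (intro allI impI)
      fix k :: int assume "k \<le> 0"
      then show "0 \<le> beta k 0 h"
        using beta_neg[OF h_def assms(2), of k 0] beta00[OF h_def assms(2)]
        by (cases "k < 0") auto
    qed
    have ex: "\<exists>m::nat. P (d - 1 - int m)"
      by (rule exI[of _ "nat (d - 1)"]) (use P0 assms(8) in simp)
    define m where "m = (LEAST m::nat. P (d - 1 - int m))"
    have Pm: "P (d - 1 - int m)" unfolding m_def using ex by (rule LeastI_ex)
    have gr: "y \<le> d - 1 - int m" if "P y" for y
    proof -
      have "y < d" using bnd that .
      then have "y = d - 1 - int (nat (d - 1 - y))" by simp
      with that have "P (d - 1 - int (nat (d - 1 - y)))" by simp
      then have "m \<le> nat (d - 1 - y)" unfolding m_def by (rule Least_le)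
      then show ?thesis using \<open>y < d\<close> by linarith
    qed
    have "hdepth h = d - 1 - int m"
      unfolding hdepth_def using Pm gr unfolding P_def
      by (intro Greatest_equality) auto
    then show ?thesis by simp
  qed
  show ?thesis using P1 P2 P3 by blast
qed

end
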